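(* Let $G$ be a $k$-degenerate graph with maximum degree $\Delta(G)$ and let $H$ be an $l$-degenerate graph. Then $AT(G+_T H)\le \max\{2\Delta(G),\,k+l\}+1$.
   Context: A graph is $k$-degenerate if its vertices can be successively deleted so that each deleted vertex has degree at most $k$ at the time of deletion. For an orientation $D$, a subdigraph is Eulerian if every vertex has equal in- and outdegree in it; $D$ is an AT-orientation if the numbers of Eulerian subgraphs with an even and with an odd number of arcs differ; $AT(G)$ is the smallest $k$ such that $G$ has an AT-orientation of maximum outdegree at most $k-1$. $T(G)$ has vertex set $V(G)\cup E(G)$: it consists of $G$, together with, for each edge $e=xy$, edges $ex$ and $ey$, and edges $ee'$ whenever edges $e,e'$ are adjacent in $G$. $G+_T H$ has vertex set $(V(G)\cup E(G))\times V(H)$, with $(u_1,u_2)\sim(v_1,v_2)$ iff [$u_1=v_1\in V(G)$ and $u_2v_2\in E(H)$] or [$u_2=v_2$ and $u_1v_1\in E(T(G))$]. *)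

theory Defs
  imports Main
begin

definition simple_graph :: "'a set \<Rightarrow> 'a set set \<Rightarrow> bool" where
  "simple_graph V E \<longleftrightarrow> finite V \<and>
     (\<forall>e\<in>E. \<exists>x y. x \<noteq> y \<and> x \<in> V \<and> y \<in> V \<and> e = {x, y})"

definition degree :: "'a set set \<Rightarrow> 'a \<Rightarrow> nat" where
  "degree E v = card {e\<in>E. v \<in> e}"

definition max_degree :: "'a set \<Rightarrow> 'a set set \<Rightarrow> nat" where
  "max_degree V E = Max (insert 0 (degree E ` V))"

text \<open>k-degenerate: there is an elimination order vs (vs!0 deleted first) such that
  each vertex has at most k neighbours among the vertices not yet deleted.\<close>
definition degenerate :: "'a set \<Rightarrow> 'a set set \<Rightarrow> nat \<Rightarrow> bool" where
  "degenerate V E k \<longleftrightarrow> (\<exists>vs. distinct vs \<and> set vs = V \<and>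
     (\<forall>i<length vs. card {u \<in> set (drop (Suc i) vs). {vs ! i, u} \<in> E} \<le> k))"

definition orientation :: "'a set \<Rightarrow> 'a set set \<Rightarrow> ('a \<times> 'a) set \<Rightarrow> bool" where
  "orientation V E D \<longleftrightarrow> (\<forall>(x, y)\<in>D. {x, y} \<in> E) \<and>
     (\<forall>x y. {x, y} \<in> E \<longrightarrow> x \<noteq> y \<longrightarrow> ((x, y) \<in> D \<longleftrightarrow> (y, x) \<notin> D))"

definition outdeg :: "('a \<times> 'a) set \<Rightarrow> 'a \<Rightarrow> nat" where
  "outdeg D v = card {w. (v, w) \<in> D}"

definition indeg :: "('a \<times> 'a) set \<Rightarrow> 'a \<Rightarrow> nat" where
  "indeg D v = card {w. (w, v) \<in> D}"

text \<open>Eulerian (spanning) subdigraphs of D, identified with their arc sets.\<close>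
definition eulerian_sub :: "('a \<times> 'a) set \<Rightarrow> ('a \<times> 'a) set \<Rightarrow> bool" where
  "eulerian_sub D S \<longleftrightarrow> S \<subseteq> D \<and> (\<forall>v. indeg S v = outdeg S v)"

definition AT_orientation :: "('a \<times> 'a) set \<Rightarrow> bool" where
  "AT_orientation D \<longleftrightarrow>
     card {S. eulerian_sub D S \<and> even (card S)} \<noteq> card {S. eulerian_sub D S \<and> odd (card S)}"

text \<open>AT(G): least k with an AT-orientation of maximum outdegree at most k - 1
  (i.e. every outdegree < k).\<close>
definition AT :: "'a set \<Rightarrow> 'a set set \<Rightarrow> nat" where
  "AT V E = (LEAST k. \<exists>D. orientation V E D \<and> AT_orientation D \<and> (\<forall>v\<in>V. outdeg D v < k))"

text \<open>The graph T(G) on V(G) \<union> E(G), with vertices Inl v and edges Inr e.\<close>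
definition TV :: "'a set \<Rightarrow> 'a set set \<Rightarrow> ('a + 'a set) set" where
  "TV V E = Inl ` V \<union> Inr ` E"

definition TE :: "'a set \<Rightarrow> 'a set set \<Rightarrow> ('a + 'a set) set set" where
  "TE V E = {{Inl x, Inl y} | x y. {x, y} \<in> E}
          \<union> {{Inr e, Inl x} | e x. e \<in> E \<and> x \<in> e}
          \<union> {{Inr e, Inr e'} | e e'. e \<in> E \<and> e' \<in> E \<and> e \<noteq> e' \<and> e \<inter> e' \<noteq> {}}"

definition prodT_V :: "'a set \<Rightarrow> 'a set set \<Rightarrow> 'b set \<Rightarrow> 'b set set \<Rightarrow> (('a + 'a set) \<times> 'b) set" where
  "prodT_V VG EG VH EH = TV VG EG \<times> VH"

definition prodT_E :: "'a set \<Rightarrow> 'a set set \<Rightarrow> 'b set \<Rightarrow> 'b set set \<Rightarrow> (('a + 'a set) \<times> 'b) set set" where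
  "prodT_E VG EG VH EH =
     {{(Inl v, u2), (Inl v, v2)} | v u2 v2. v \<in> VG \<and> {u2, v2} \<in> EH}
   \<union> {{(u1, w), (v1, w)} | u1 v1 w. w \<in> VH \<and> {u1, v1} \<in> TE VG EG}"

end

theory Submission
  imports Defs
begin

lemma in_drop_iff:
  assumes "distinct vs" "j < length vs"
  shows "vs ! j \<in> set (drop n vs) \<longleftrightarrow> n \<le> j"
proof
  assume "vs ! j \<in> set (drop n vs)"
  then obtain t where t: "t < length (drop n vs)" "drop n vs ! t = vs ! j"
    by (auto simp: in_set_conv_nth)
  then have "vs ! (n + t) = vs ! j" "n + t < length vs" by auto
  then have "n + t = j" using assms nth_eq_iff_index_eq by blast
  then show "n \<le> j" by simp
next
  assume "n \<le> j"
  then have "drop n vs ! (j - n) = vs ! j" "j - n < length (drop n vs)" using assms by auto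
  then show "vs ! j \<in> set (drop n vs)" by (metis nth_mem)
qed

lemma degen_to_rank:
  assumes "degenerate V E k"
  shows "\<exists>r. inj_on r V \<and> (\<forall>v\<in>V. r v < card V) \<and>
     (\<forall>v\<in>V. card {u\<in>V. r v < r u \<and> {v,u} \<in> E} \<le> k)"
proof -
  obtain vs where vs: "distinct vs" "set vs = V"
    "\<forall>i<length vs. card {u \<in> set (drop (Suc i) vs). {vs ! i, u} \<in> E} \<le> k"
    using assms unfolding degenerate_def by blast
  define r where "r = inv_into {..<length vs} ((!) vs)"
  have bij: "bij_betw ((!) vs) {..<length vs} V" using vs by (simp add: bij_betw_nth)
  have r1: "r v < length vs" "vs ! (r v) = v" if "v \<in> V" for v
    using that bij unfolding r_def
    by (auto simp: bij_betw_def inv_into_into f_inv_into_f)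
  have inj: "inj_on r V" by (metis inj_onI r1(2))
  have len: "length vs = card V" using vs distinct_card by metis
  have "card {u\<in>V. r v < r u \<and> {v,u} \<in> E} \<le> k" if v: "v \<in> V" for v
  proof -
    have "{u\<in>V. r v < r u \<and> {v,u} \<in> E} = {u \<in> set (drop (Suc (r v)) vs). {vs ! (r v), u} \<in> E}"
    proof (intro set_eqI iffI)
      fix u assume u: "u \<in> {u\<in>V. r v < r u \<and> {v,u} \<in> E}"
      then have "vs ! r u \<in> set (drop (Suc (r v)) vs)" using in_drop_iff[OF vs(1) r1(1)] by auto
      then show "u \<in> {u \<in> set (drop (Suc (r v)) vs). {vs ! (r v), u} \<in> E}"
        using u r1 v by auto
    next
      fix u assume u: "u \<in> {u \<in> set (drop (Suc (r v)) vs). {vs ! (r v), u} \<in> E}"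
      then have uV: "u \<in> V" using vs(2) in_set_dropD by fastforce
      then have "vs ! r u \<in> set (drop (Suc (r v)) vs)" using u r1 by auto
      then have "Suc (r v) \<le> r u" using in_drop_iff[OF vs(1) r1(1)[OF uV]] by simp
      then show "u \<in> {u\<in>V. r v < r u \<and> {v,u} \<in> E}" using u uV r1 v by auto
    qed
    then show ?thesis using vs(3) r1(1)[OF v] by simp
  qed
  then show ?thesis using inj r1 len by auto
qed

lemma AT_rank:
  fixes r :: "'a \<Rightarrow> nat"
  assumes fin: "finite V" and edges: "\<And>x y. {x,y} \<in> E \<Longrightarrow> x \<in> V \<and> y \<in> V"
    and inj: "inj_on r V"
    and bd: "\<forall>v\<in>V. card {u\<in>V. r v < r u \<and> {v,u} \<in> E} \<le> d"
  shows "AT V E \<le> d + 1"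
proof -
  define D where "D = {(a,b). a \<in> V \<and> b \<in> V \<and> {a,b} \<in> E \<and> r a < r b}"
  have or: "orientation V E D"
    unfolding orientation_def D_def
  proof (intro conjI allI impI)
    fix x y assume "{x,y} \<in> E" "x \<noteq> y"
    then have "x \<in> V" "y \<in> V" "r x \<noteq> r y" using edges inj by (auto dest: inj_onD)
    then show "((x, y) \<in> {(a, b). a \<in> V \<and> b \<in> V \<and> {a, b} \<in> E \<and> r a < r b}) =
           ((y, x) \<notin> {(a, b). a \<in> V \<and> b \<in> V \<and> {a, b} \<in> E \<and> r a < r b})"
      using \<open>{x,y} \<in> E\<close> by (auto simp: insert_commute linorder_neq_iff)
  qed auto
  have finD: "finite D" by (rule finite_subset[of _ "V \<times> V"]) (auto simp: D_def fin)
  have eul: "S = {}" if "eulerian_sub D S" for S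
  proof (rule ccontr)
    assume ne: "S \<noteq> {}"
    have SD: "S \<subseteq> D" and bal: "\<And>v. indeg S v = outdeg S v" using that by (auto simp: eulerian_sub_def)
    have finS: "finite S" using finD SD finite_subset by blast
    define W where "W = fst ` S \<union> snd ` S"
    have finW: "finite W" "W \<noteq> {}" using finS ne by (auto simp: W_def)
    obtain m where m: "m \<in> W" "\<And>w. w \<in> W \<Longrightarrow> r m \<le> r w"
    proof -
      have "Min (r ` W) \<in> r ` W" using finW by simp
      then obtain m where "m \<in> W" "r m = Min (r ` W)" by auto
      then show ?thesis using that finW by auto
    qed
    have in0: "{w. (w,m) \<in> S} = {}"
    proof -
      { fix w assume "(w,m) \<in> S"
        then have "r w < r m" "w \<in> W" using SD by (auto simp: D_def W_def image_iff; force)+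
        then have False using m by force }
      then show ?thesis by auto
    qed
    have "finite {w. (m,w) \<in> S}"
      by (rule finite_subset[of _ "snd ` S"]) (force, simp add: finS)
    moreover have "card {w. (m,w) \<in> S} = 0" using bal[of m] in0 by (simp add: indeg_def outdeg_def)
    ultimately have "{w. (m,w) \<in> S} = {}" by simp
    then show False using m(1) in0 by (auto simp: W_def)
  qed
  have e0: "eulerian_sub D {}" by (simp add: eulerian_sub_def indeg_def outdeg_def)
  have eq: "\<And>S. eulerian_sub D S \<longleftrightarrow> S = {}" using eul e0 by blast
  have c1: "{S. eulerian_sub D S \<and> even (card S)} = {{}}" by (auto simp: eq)
  have c2: "{S. eulerian_sub D S \<and> odd (card S)} = {}" by (auto simp: eq)
  have at: "AT_orientation D" unfolding AT_orientation_def c1 c2 by simp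
  have "\<forall>v\<in>V. outdeg D v < d + 1"
  proof
    fix v assume v: "v \<in> V"
    have "{w. (v,w) \<in> D} = {u\<in>V. r v < r u \<and> {v,u} \<in> E}" using v by (auto simp: D_def)
    then show "outdeg D v < d + 1" using bd v by (simp add: outdeg_def le_imp_less_Suc)
  qed
  then show ?thesis unfolding AT_def using or at by (intro Least_le) blast
qed

lemma TE_Inl: "{Inl a, Inl b} \<in> TE VG EG \<Longrightarrow> {a,b} \<in> EG"
  unfolding TE_def by (auto simp: doubleton_eq_iff insert_commute)

lemma TE_Inr: "{Inr e, u} \<in> TE VG EG \<Longrightarrow> e \<in> EG \<and> ((\<exists>x\<in>e. u = Inl x) \<or> (\<exists>e'\<in>EG. e' \<noteq> e \<and> e \<inter> e' \<noteq> {} \<and> u = Inr e'))"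
  unfolding TE_def by (auto simp: doubleton_eq_iff)

lemma simple_edge: "simple_graph V E \<Longrightarrow> e \<in> E \<Longrightarrow> \<exists>x y. x \<noteq> y \<and> x \<in> V \<and> y \<in> V \<and> e = {x,y}"
  unfolding simple_graph_def by blast

lemma TE_in: assumes "simple_graph VG EG" "{x,y} \<in> TE VG EG" shows "x \<in> TV VG EG \<and> y \<in> TV VG EG"
proof -
  have sub: "e \<subseteq> VG" if "e \<in> EG" for e using simple_edge[OF assms(1) that] by auto
  show ?thesis using assms(2) unfolding TE_def TV_def
    apply (auto simp: doubleton_eq_iff)
    using sub by (fastforce dest: simple_edge[OF assms(1)] simp: doubleton_eq_iff)+
qed

lemma finite_EG: "simple_graph VG EG \<Longrightarrow> finite EG"
proof -
  assume s: "simple_graph VG EG"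
  then have "EG \<subseteq> Pow VG" using simple_edge[OF s] by blast
  moreover have "finite VG" using s by (simp add: simple_graph_def)
  ultimately show ?thesis by (meson finite_Pow_iff finite_subset)
qed

lemma degree_le: "simple_graph VG EG \<Longrightarrow> x \<in> VG \<Longrightarrow> degree EG x \<le> max_degree VG EG"
  unfolding max_degree_def simple_graph_def by (auto intro: Max_ge)

lemma Inr_nbrs:
  assumes s: "simple_graph VG EG" and e: "e \<in> EG"
  shows "card {u. {Inr e, u} \<in> TE VG EG} \<le> 2 * max_degree VG EG"
proof -
  obtain x y where xy: "x \<noteq> y" "x \<in> VG" "y \<in> VG" "e = {x,y}" using simple_edge[OF s e] by blast
  have finE: "finite EG" using finite_EG[OF s] .
  define Ax where "Ax = {e'\<in>EG. x \<in> e'}"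
  define Ay where "Ay = {e'\<in>EG. y \<in> e'}"
  have "{u. {Inr e, u} \<in> TE VG EG} \<subseteq> Inl ` e \<union> Inr ` ((Ax - {e}) \<union> (Ay - {e}))"
    using TE_Inr[of e] xy unfolding Ax_def Ay_def by blast
  then have "card {u. {Inr e, u} \<in> TE VG EG} \<le> card (Inl ` e \<union> Inr ` ((Ax - {e}) \<union> (Ay - {e})))"
    by (rule card_mono[rotated]) (auto simp: xy Ax_def Ay_def finE)
  also have "\<dots> \<le> card (Inl ` e :: ('a + 'a set) set) + card (Inr ` ((Ax - {e}) \<union> (Ay - {e})) :: ('a + 'a set) set)" by (rule card_Un_le)
  also have "\<dots> \<le> card e + card ((Ax - {e}) \<union> (Ay - {e}))" by (intro add_mono card_image_le) (auto simp: xy finE Ax_def Ay_def)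
  also have "\<dots> \<le> 2 + (card (Ax - {e}) + card (Ay - {e}))" using card_Un_le xy by simp
  also have "\<dots> = card Ax + card Ay"
  proof -
    have "e \<in> Ax" "e \<in> Ay" "finite Ax" "finite Ay" using e xy finE by (auto simp: Ax_def Ay_def)
    then have "card Ax \<ge> 1" "card Ay \<ge> 1" "card (Ax - {e}) = card Ax - 1" "card (Ay - {e}) = card Ay - 1"
      by (auto simp: Suc_le_eq card_gt_0_iff)
    then show ?thesis by simp
  qed
  also have "\<dots> \<le> 2 * max_degree VG EG"
    using degree_le[OF s xy(2)] degree_le[OF s xy(3)] by (simp add: degree_def Ax_def Ay_def)
  finally show ?thesis .
qed

lemma prod_Inr_nbr:
  assumes "{(Inr e, h), u} \<in> prodT_E VG EG VH EH"
  shows "u \<in> (\<lambda>x. (x, h)) ` {u. {Inr e, u} \<in> TE VG EG}"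
  using assms unfolding prodT_E_def
  by (auto simp: doubleton_eq_iff insert_commute)

lemma prod_Inl_nbr:
  assumes "{(Inl v, h), (Inl v', h')} \<in> prodT_E VG EG VH EH"
  shows "(v = v' \<and> {h,h'} \<in> EH) \<or> (h = h' \<and> {v,v'} \<in> EG)"
  using assms unfolding prodT_E_def
  by (auto simp: doubleton_eq_iff insert_commute dest: TE_Inl)

lemma prod_edge_in:
  assumes sG: "simple_graph VG EG" and sH: "simple_graph VH EH"
    and "{x,y} \<in> prodT_E VG EG VH EH"
  shows "x \<in> prodT_V VG EG VH EH \<and> y \<in> prodT_V VG EG VH EH"
  using assms(3) unfolding prodT_E_def prodT_V_def
  apply (auto simp: doubleton_eq_iff)
  by (auto simp: TV_def doubleton_eq_iff dest!: simple_edge[OF sH] TE_in[OF sG])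

lemma mixed_eq: "(b::nat) < M \<Longrightarrow> b' < M \<Longrightarrow> a * M + b = a' * M + b' \<Longrightarrow> a = a' \<and> b = b'"
  by (metis add.commute div_mult_self1 div_less less_nat_zero_code mod_mult_self2 mod_less add_0_right mult.commute gr_implies_not0)

theorem corollary3p10:
  fixes VG :: "'a set" and EG :: "'a set set" and VH :: "'b set" and EH :: "'b set set"
    and k l :: nat
  assumes "simple_graph VG EG" and "simple_graph VH EH"
    and "degenerate VG EG k" and "degenerate VH EH l"
  shows "AT (prodT_V VG EG VH EH) (prodT_E VG EG VH EH)
           \<le> max (2 * max_degree VG EG) (k + l) + 1"
proof -
  note sG = assms(1) and sH = assms(2)
  obtain rg where rg: "inj_on rg VG" "\<forall>v\<in>VG. rg v < card VG"
    "\<forall>v\<in>VG. card {u\<in>VG. rg v < rg u \<and> {v,u} \<in> EG} \<le> k"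
    using degen_to_rank[OF assms(3)] by blast
  obtain rh where rh: "inj_on rh VH" "\<forall>v\<in>VH. rh v < card VH"
    "\<forall>v\<in>VH. card {u\<in>VH. rh v < rh u \<and> {v,u} \<in> EH} \<le> l"
    using degen_to_rank[OF assms(4)] by blast
  define V where "V = prodT_V VG EG VH EH"
  define E where "E = prodT_E VG EG VH EH"
  define A :: "(('a + 'a set) \<times> 'b) set" where "A = Inr ` EG \<times> VH"
  have finVG: "finite VG" and finVH: "finite VH" using sG sH by (auto simp: simple_graph_def)
  have finEG: "finite EG" using finite_EG[OF sG] .
  have finA: "finite A" using finEG finVH by (simp add: A_def)
  obtain r0 where r0: "bij_betw r0 A {0..<card A}" using ex_bij_betw_finite_nat[OF finA] by blast
  define N where "N = card A"
  define M where "M = card VH"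
  define R where "R p = (if p \<in> A then r0 p else N + rg (projl (fst p)) * M + rh (snd p))" for p :: "('a + 'a set) \<times> 'b"
  define d where "d = max (2 * max_degree VG EG) (k + l)"
  have r0lt: "r0 p < N" if "p \<in> A" for p using r0 that by (auto simp: N_def bij_betw_def)
  have finV: "finite V" using finVG finEG finVH by (simp add: V_def prodT_V_def TV_def)
  have Vcases: "p \<in> A \<or> (\<exists>v h. p = (Inl v, h) \<and> v \<in> VG \<and> h \<in> VH)" if "p \<in> V" for p
    using that by (auto simp: V_def prodT_V_def TV_def A_def)
  have RInl: "R (Inl v, h) = N + rg v * M + rh h" for v h by (auto simp: R_def A_def)
  have inj: "inj_on R V"
  proof (rule inj_onI)
    fix p q assume p: "p \<in> V" and q: "q \<in> V" and eq: "R p = R q"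
    show "p = q"
    proof (cases "p \<in> A")
      case True
      then show ?thesis
      proof (cases "q \<in> A")
        case True
        then show ?thesis using \<open>p \<in> A\<close> eq r0 by (auto simp: R_def bij_betw_def dest: inj_onD)
      next
        case False
        then obtain v h where "q = (Inl v, h)" using Vcases q by blast
        then show ?thesis using eq r0lt[OF True] True False by (simp add: R_def)
      qed
    next
      case False
      then obtain v h where ph: "p = (Inl v, h)" "v \<in> VG" "h \<in> VH" using Vcases p by blast
      show ?thesis
      proof (cases "q \<in> A")
        case True
        then show ?thesis using eq r0lt[OF True] False ph by (simp add: R_def)
      next
        case False
        then obtain v' h' where qh: "q = (Inl v', h')" "v' \<in> VG" "h' \<in> VH" using Vcases q by blast
        have "rg v * M + rh h = rg v' * M + rh h'" using eq ph qh RInl by simp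
        then have "rg v = rg v' \<and> rh h = rh h'" using mixed_eq rh(2) ph qh M_def by blast
        then show ?thesis using ph qh rg(1) rh(1) by (auto dest: inj_onD)
      qed
    qed
  qed
  have bd: "\<forall>p\<in>V. card {u\<in>V. R p < R u \<and> {p,u} \<in> E} \<le> d"
  proof
    fix p assume p: "p \<in> V"
    show "card {u\<in>V. R p < R u \<and> {p,u} \<in> E} \<le> d"
    proof (cases "p \<in> A")
      case True
      then obtain e h where ph: "p = (Inr e, h)" "e \<in> EG" by (auto simp: A_def)
      have fT: "finite {u. {Inr e, u} \<in> TE VG EG}"
      proof (rule finite_subset[of _ "TV VG EG"])
        show "{u. {Inr e, u} \<in> TE VG EG} \<subseteq> TV VG EG" using TE_in[OF sG] by blast
        show "finite (TV VG EG)" using finVG finEG by (simp add: TV_def)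
      qed
      have "{u\<in>V. R p < R u \<and> {p,u} \<in> E} \<subseteq> (\<lambda>x. (x, h)) ` {u. {Inr e, u} \<in> TE VG EG}"
        using prod_Inr_nbr ph by (auto simp: E_def)
      then have "card {u\<in>V. R p < R u \<and> {p,u} \<in> E} \<le> card ((\<lambda>x. (x, h)) ` {u. {Inr e, u} \<in> TE VG EG})"
        using fT by (intro card_mono) auto
      also have "\<dots> \<le> card {u. {Inr e, u} \<in> TE VG EG}" by (rule card_image_le[OF fT])
      also have "\<dots> \<le> 2 * max_degree VG EG" by (rule Inr_nbrs[OF sG ph(2)])
      finally show ?thesis by (simp add: d_def)
    next
      case False
      then obtain v h where ph: "p = (Inl v, h)" "v \<in> VG" "h \<in> VH" using Vcases p by blast
      let ?X = "(\<lambda>h'. (Inl v, h')) ` {u\<in>VH. rh h < rh u \<and> {h,u} \<in> EH} :: (('a + 'a set) \<times> 'b) set"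
      let ?Y = "(\<lambda>v'. (Inl v', h)) ` {u\<in>VG. rg v < rg u \<and> {v,u} \<in> EG} :: (('a + 'a set) \<times> 'b) set"
      have sub: "{u\<in>V. R p < R u \<and> {p,u} \<in> E} \<subseteq> ?X \<union> ?Y"
      proof
        fix u assume u: "u \<in> {u\<in>V. R p < R u \<and> {p,u} \<in> E}"
        have "u \<notin> A"
        proof
          assume "u \<in> A"
          then have "R u < N" using r0lt by (simp add: R_def)
          then show False using u ph RInl by simp
        qed
        then obtain v' h' where uh: "u = (Inl v', h')" "v' \<in> VG" "h' \<in> VH" using Vcases u by blast
        have lt: "rg v * M + rh h < rg v' * M + rh h'" using u ph uh RInl by simp
        have "{(Inl v, h), (Inl v', h')} \<in> prodT_E VG EG VH EH" using u ph uh by (simp add: E_def)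
        then have "(v = v' \<and> {h,h'} \<in> EH) \<or> (h = h' \<and> {v,v'} \<in> EG)"
          by (rule prod_Inl_nbr)
        then show "u \<in> ?X \<union> ?Y"
        proof
          assume a: "v = v' \<and> {h,h'} \<in> EH"
          then have "rh h < rh h'" using lt by simp
          then show ?thesis using a uh by auto
        next
          assume a: "h = h' \<and> {v,v'} \<in> EG"
          then have "rg v < rg v'" using lt by simp
          then show ?thesis using a uh by auto
        qed
      qed
      have "card {u\<in>V. R p < R u \<and> {p,u} \<in> E} \<le> card (?X \<union> ?Y)"
        by (rule card_mono[OF _ sub]) (use finVG finVH in auto)
      also have "\<dots> \<le> card ?X + card ?Y" by (rule card_Un_le)
      also have "\<dots> \<le> l + k"
        using rg(3) rh(3) ph finVG finVH
        by (intro add_mono order.trans[OF card_image_le]) auto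
      finally show ?thesis by (simp add: d_def)
    qed
  qed
  have edges: "\<And>x y. {x,y} \<in> E \<Longrightarrow> x \<in> V \<and> y \<in> V"
    using prod_edge_in[OF sG sH] by (simp add: E_def V_def)
  have "AT V E \<le> d + 1" by (rule AT_rank[OF finV edges inj bd])
  then show ?thesis by (simp add: V_def E_def d_def)
qed

end
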